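(* Suppose A1 and A3 hold and let $\{x_k\}$ be generated by Algorithm 1. Let $N_k=\sum_{j=0}^{k}(l_j+1)$ be the total number of evaluations of $f$ at trial points $x_j+\alpha_j\beta^l d_j$ performed in iterations $0,\dots,k$. Then $$N_k\le 2(k+1)+\frac{1}{\log\beta}\left[\log\bar\alpha-\log\alpha_0\right],$$ where $\bar\alpha=\min\{\alpha_0,\,2(1-\rho)c_1/(Lc_2^2)\}$.
   Context: Let $(X,\langle\cdot,\cdot\rangle)$ be a real Hilbert space with induced norm $\|\cdot\|$, and $f:X\to\mathbb{R}$ Fréchet differentiable with gradient $\nabla f$. Algorithm 1 (general non-monotone descent algorithm): parameters $x_0\in X$, $\alpha_0>0$, $\beta,\rho\in(0,1)$. For $k=0,1,2,\dots$: choose $d_k\in X$ with $\langle\nabla f(x_k),d_k\rangle<0$; then for $l=0,1,2,\dots$ choose a number $\nu_{k,l}\ge 0$ and test $$f(x_k+\alpha_k\beta^l d_k)\le f(x_k)+\rho\alpha_k\beta^l\langle\nabla f(x_k),d_k\rangle+\nu_{k,l};$$ let $l_k$ be the first $l$ for which this holds, set $\nu_k:=\nu_{k,l_k}$, $x_{k+1}=x_k+\alpha_k\beta^{l_k}d_k$ and $\alpha_{k+1}=\alpha_k\beta^{l_k-1}$. It is assumed the algorithm generates infinite sequences (all $l_k$ finite). Assumptions: A1: $\nabla f$ is Lipschitz continuous with constant $L>0$. A3: there are constants $c_1,c_2>0$ with $\langle\nabla f(x_k),d_k\rangle\le -c_1\|\nabla f(x_k)\|^2$ and $\|d_k\|\le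 c_2\|\nabla f(x_k)\|$ for all $k$. *)

theory Defs
  imports "HOL-Analysis.Analysis"
begin

end

theory Submission
  imports Defs
begin

lemma descent_lemma:
  fixes f :: "'a::real_inner \<Rightarrow> real" and g :: "'a \<Rightarrow> 'a"
  assumes grad: "\<And>y. (f has_derivative (\<lambda>h. inner (g y) h)) (at y)"
    and Lp: "L \<ge> 0" and Lip: "\<And>u v. norm (g u - g v) \<le> L * norm (u - v)"
  shows "f (x + v) \<le> f x + inner (g x) v + L / 2 * (norm v)\<^sup>2"
proof -
  define \<phi> where "\<phi> s = f (x + s *\<^sub>R v) - s * inner (g x) v - L / 2 * s\<^sup>2 * (norm v)\<^sup>2" for s :: real
  have D: "DERIV \<phi> s :> inner (g (x + s *\<^sub>R v)) v - inner (g x) v - L * s * (norm v)\<^sup>2" for s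
  proof -
    have h1: "((\<lambda>s. x + s *\<^sub>R v) has_derivative (\<lambda>h. h *\<^sub>R v)) (at s)"
      by (auto intro!: derivative_eq_intros)
    have "((\<lambda>s. f (x + s *\<^sub>R v)) has_derivative (\<lambda>h. inner (g (x + s *\<^sub>R v)) (h *\<^sub>R v))) (at s)"
      by (rule has_derivative_compose[OF h1 grad])
    hence "((\<lambda>s. f (x + s *\<^sub>R v)) has_real_derivative inner (g (x + s *\<^sub>R v)) v) (at s)"
      by (rule has_derivative_imp_has_field_derivative) simp
    then show ?thesis unfolding \<phi>_def
      by (auto intro!: derivative_eq_intros simp: power2_eq_square)
  qed
  have "\<phi> 1 \<le> \<phi> 0"
  proof (rule DERIV_nonpos_imp_nonincreasing[of 0 1])
    fix s :: real assume s: "0 \<le> s" "s \<le> 1"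
    have "inner (g (x + s *\<^sub>R v)) v - inner (g x) v = inner (g (x + s *\<^sub>R v) - g x) v"
      by (simp add: inner_diff_left)
    also have "\<dots> \<le> norm (g (x + s *\<^sub>R v) - g x) * norm v" by (rule norm_cauchy_schwarz)
    also have "\<dots> \<le> (L * norm (s *\<^sub>R v)) * norm v"
      using Lip[of "x + s *\<^sub>R v" x] by (intro mult_right_mono) auto
    also have "\<dots> = L * s * (norm v)\<^sup>2" using s by (simp add: power2_eq_square)
    finally show "\<exists>y. DERIV \<phi> s :> y \<and> y \<le> 0" using D[of s] by (intro exI[of _ "inner (g (x + s *\<^sub>R v)) v - inner (g x) v - L * s * (norm v)\<^sup>2"]) auto
  qed simp
  then show ?thesis unfolding \<phi>_def by simp
qed
theorem theorem1:
  fixes f :: "'a::{real_inner, complete_space} \<Rightarrow> real"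
    and g :: "'a \<Rightarrow> 'a"
    and x d :: "nat \<Rightarrow> 'a"
    and \<alpha> :: "nat \<Rightarrow> real"
    and l :: "nat \<Rightarrow> nat"
    and \<nu> :: "nat \<Rightarrow> nat \<Rightarrow> real"
    and \<beta> \<rho> L c1 c2 :: real
    and k :: nat
  assumes grad: "\<And>y. (f has_derivative (\<lambda>h. inner (g y) h)) (at y)"
    and alpha0: "\<alpha> 0 > 0"
    and beta: "0 < \<beta>" "\<beta> < 1"
    and rho: "0 < \<rho>" "\<rho> < 1"
    and descent: "\<And>k. inner (g (x k)) (d k) < 0"
    and nu_nonneg: "\<And>k j. \<nu> k j \<ge> 0"
    and accept: "\<And>k. f (x k + (\<alpha> k * \<beta> ^ l k) *\<^sub>R d k)
        \<le> f (x k) + \<rho> * \<alpha> k * \<beta> ^ l k * inner (g (x k)) (d k) + \<nu> k (l k)"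
    and first: "\<And>k j. j < l k \<Longrightarrow> \<not> (f (x k + (\<alpha> k * \<beta> ^ j) *\<^sub>R d k)
        \<le> f (x k) + \<rho> * \<alpha> k * \<beta> ^ j * inner (g (x k)) (d k) + \<nu> k j)"
    and xstep: "\<And>k. x (Suc k) = x k + (\<alpha> k * \<beta> ^ l k) *\<^sub>R d k"
    and astep: "\<And>k. \<alpha> (Suc k) = \<alpha> k * \<beta> powi (int (l k) - 1)"
    and A1: "L > 0" "\<And>u v. norm (g u - g v) \<le> L * norm (u - v)"
    and A3: "c1 > 0" "c2 > 0"
      "\<And>k. inner (g (x k)) (d k) \<le> - c1 * (norm (g (x k)))\<^sup>2"
      "\<And>k. norm (d k) \<le> c2 * norm (g (x k))"
  shows "real (\<Sum>j\<le>k. l j + 1)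
    \<le> 2 * (real k + 1) + (1 / ln \<beta>) * (ln (min (\<alpha> 0) (2 * (1 - \<rho>) * c1 / (L * c2\<^sup>2))) - ln (\<alpha> 0))"
  proof -
  define A' where "A' = 2 * (1 - \<rho>) * c1 / (L * c2\<^sup>2)"
  define ab where "ab = min (\<alpha> 0) A'"
  have A'pos: "A' > 0" unfolding A'_def using rho A1 A3 by auto
  have abpos: "ab > 0" unfolding ab_def using A'pos alpha0 by auto
  have bpow: "\<beta> powi n > 0" for n :: int using beta by simp
  have apos: "\<alpha> k > 0" for k
    by (induction k) (use alpha0 bpow in \<open>auto simp: astep\<close>)
  have key: "f (x k + t *\<^sub>R d k) \<le> f (x k) + \<rho> * t * inner (g (x k)) (d k) + \<nu> k j"
    if t: "0 < t" "t \<le> A'" for k t j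
  proof -
    define G where "G = (norm (g (x k)))\<^sup>2"
    define p where "p = inner (g (x k)) (d k)"
    have Gnn: "G \<ge> 0" unfolding G_def by simp
    have p1: "p \<le> - c1 * G" unfolding p_def G_def using A3(3) by simp
    have "norm (d k) \<le> c2 * norm (g (x k))" using A3(4) .
    hence "(norm (d k))\<^sup>2 \<le> (c2 * norm (g (x k)))\<^sup>2" by (intro power_mono) auto
    hence dn: "(norm (d k))\<^sup>2 \<le> c2\<^sup>2 * G" unfolding G_def by (simp add: power_mult_distrib)
    have tL: "t * (L * c2\<^sup>2) \<le> 2 * (1 - \<rho>) * c1"
      using t unfolding A'_def using A1 A3 by (simp add: field_simps)
    have "f (x k + t *\<^sub>R d k) \<le> f (x k) + inner (g (x k)) (t *\<^sub>R d k) + L / 2 * (norm (t *\<^sub>R d k))\<^sup>2"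
      by (rule descent_lemma[OF grad]) (use A1 in auto)
    also have "\<dots> = f (x k) + t * p + L / 2 * t\<^sup>2 * (norm (d k))\<^sup>2"
      using t by (simp add: p_def power_mult_distrib)
    also have "\<dots> \<le> f (x k) + t * p + L / 2 * t\<^sup>2 * (c2\<^sup>2 * G)"
      using dn A1 by (intro add_left_mono mult_left_mono) auto
    also have "L / 2 * t\<^sup>2 * (c2\<^sup>2 * G) = t / 2 * G * (t * (L * c2\<^sup>2))"
      by (simp add: power2_eq_square)
    also have "\<dots> \<le> t / 2 * G * (2 * (1 - \<rho>) * c1)"
      using tL t Gnn by (intro mult_left_mono) auto
    also have "t / 2 * G * (2 * (1 - \<rho>) * c1) = t * (1 - \<rho>) * (c1 * G)" by simp
    also have "\<dots> \<le> t * (1 - \<rho>) * (- p)"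
      using p1 t rho by (intro mult_left_mono) auto
    finally have "f (x k + t *\<^sub>R d k) \<le> f (x k) + \<rho> * t * p"
      by (simp add: algebra_simps)
    then show ?thesis using nu_nonneg[of k j] by (simp add: p_def)
  qed
  have lower: "\<alpha> k \<ge> ab" for k
  proof (induction k)
    case 0 show ?case unfolding ab_def by simp
  next
    case (Suc k)
    show ?case
    proof (cases "l k = 0")
      case True
      hence "\<alpha> (Suc k) = \<alpha> k / \<beta>" by (simp add: astep power_int_minus divide_inverse)
      also have "\<dots> \<ge> \<alpha> k" using apos[of k] beta by (simp add: le_divide_eq)
      finally show ?thesis using Suc by simp
    next
      case False
      have eq: "\<alpha> (Suc k) = \<alpha> k * \<beta> ^ (l k - 1)"
        using False by (simp add: astep power_int_def nat_diff_distrib' of_nat_diff)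
      have "\<not> (\<alpha> k * \<beta> ^ (l k - 1) \<le> A')"
      proof
        assume h: "\<alpha> k * \<beta> ^ (l k - 1) \<le> A'"
        have "0 < \<alpha> k * \<beta> ^ (l k - 1)" using apos[of k] beta by simp
        from key[OF this h, of k "l k - 1"] first[of "l k - 1" k] False
        show False by (simp add: mult.assoc)
      qed
      thus ?thesis using eq unfolding ab_def by simp
    qed
  qed
  have lnstep: "ln (\<alpha> (Suc k)) = ln (\<alpha> k) + (real (l k) - 1) * ln \<beta>" for k
  proof -
    have "\<alpha> (Suc k) = \<alpha> k * \<beta> ^ l k / \<beta>"
      using beta by (simp add: astep power_int_diff)
    then have "ln (\<alpha> (Suc k)) = ln (\<alpha> k) + ln (\<beta> ^ l k) - ln \<beta>"
      using apos[of k] beta by (simp add: ln_div ln_mult)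
    then show ?thesis using beta by (simp add: ln_realpow algebra_simps)
  qed
  have lnsum: "ln (\<alpha> (Suc n)) = ln (\<alpha> 0) + (\<Sum>j\<le>n. real (l j) - 1) * ln \<beta>" for n
    by (induction n) (simp_all add: lnstep algebra_simps)
  define T where "T = (\<Sum>j\<le>k. real (l j) - 1)"
  have S: "real (\<Sum>j\<le>k. l j + 1) = T + 2 * (real k + 1)"
    unfolding T_def by (simp add: sum.distrib sum_subtractf)
  have lnb: "ln \<beta> < 0" using beta by simp
  have "ln ab \<le> ln (\<alpha> (Suc k))" using lower[of "Suc k"] abpos by simp
  hence "ln ab \<le> ln (\<alpha> 0) + T * ln \<beta>" using lnsum[of k] T_def by simp
  hence "T * ln \<beta> \<ge> ln ab - ln (\<alpha> 0)" by simp
  hence "T \<le> (ln ab - ln (\<alpha> 0)) / ln \<beta>" using lnb by (simp add: le_divide_eq)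
  then show ?thesis using S unfolding ab_def A'_def by simp
qed

end
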